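(* Let $n\geq 5$, let $S$ be the set of all $3$-cycles in $S_n$, let $CAG_n=\mathrm{Cay}(A_n,S)$, and let $G_e$ be the stabilizer of the identity vertex $e$ in $\mathrm{Aut}(CAG_n)$. For $1\leq i<j<k\leq n$ put $\Delta_{i,j,k}=\{(i,j,k),(i,k,j)\}$ and $\Delta=\{\Delta_{i,j,k}\mid 1\leq i<j<k\leq n\}$. Each $g\in G_e$ permutes the members of $\Delta$, giving an action of $G_e$ on $\Delta$; let $K$ be the kernel of this action. Then $|K|\leq 2$.
   Context: For a finite group $\Gamma$ and a subset $T\subseteq\Gamma$ with $e\notin T$ and $T=T^{-1}$, the Cayley graph $\mathrm{Cay}(\Gamma,T)$ is the undirected graph with vertex set $\Gamma$ and edge set $\{\{\gamma,t\gamma\}\mid \gamma\in\Gamma, t\in T\}$. Elements of $G_e$ map $S$ (the neighbourhood of $e$) to itself. *)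

theory Defs
  imports "HOL-Combinatorics.Permutations" "HOL-Library.FuncSet"
begin

text \<open>Permutations of {1..n} are functions nat => nat that permute {1..n};
  the product t*g of permutations is the composition t o g.\<close>

definition alt_grp :: "nat \<Rightarrow> (nat \<Rightarrow> nat) set" where
  "alt_grp n = {p. p permutes {1..n} \<and> evenperm p}"

definition cyc3 :: "nat \<Rightarrow> nat \<Rightarrow> nat \<Rightarrow> nat \<Rightarrow> nat" where
  "cyc3 i j k = (\<lambda>x. if x = i then j else if x = j then k else if x = k then i else x)"

definition three_cycles :: "nat \<Rightarrow> (nat \<Rightarrow> nat) set" where
  "three_cycles n = {cyc3 i j k | i j k. i \<in> {1..n} \<and> j \<in> {1..n} \<and> k \<in> {1..n}
      \<and> i \<noteq> j \<and> j \<noteq> k \<and> i \<noteq> k}"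

definition cag_adj :: "nat \<Rightarrow> (nat \<Rightarrow> nat) \<Rightarrow> (nat \<Rightarrow> nat) \<Rightarrow> bool" where
  "cag_adj n x y = (\<exists>t\<in>three_cycles n. y = t \<circ> x \<or> x = t \<circ> y)"

definition cag_aut :: "nat \<Rightarrow> ((nat \<Rightarrow> nat) \<Rightarrow> (nat \<Rightarrow> nat)) set" where
  "cag_aut n = {\<phi> \<in> alt_grp n \<rightarrow>\<^sub>E alt_grp n. bij_betw \<phi> (alt_grp n) (alt_grp n) \<and>
      (\<forall>x\<in>alt_grp n. \<forall>y\<in>alt_grp n. cag_adj n x y \<longleftrightarrow> cag_adj n (\<phi> x) (\<phi> y))}"

definition stab_e :: "nat \<Rightarrow> ((nat \<Rightarrow> nat) \<Rightarrow> (nat \<Rightarrow> nat)) set" where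
  "stab_e n = {\<phi> \<in> cag_aut n. \<phi> id = id}"

definition Delta_ijk :: "nat \<Rightarrow> nat \<Rightarrow> nat \<Rightarrow> (nat \<Rightarrow> nat) set" where
  "Delta_ijk i j k = {cyc3 i j k, cyc3 i k j}"

definition Delta :: "nat \<Rightarrow> (nat \<Rightarrow> nat) set set" where
  "Delta n = {Delta_ijk i j k | i j k. 1 \<le> i \<and> i < j \<and> j < k \<and> k \<le> n}"

definition delta_kernel :: "nat \<Rightarrow> ((nat \<Rightarrow> nat) \<Rightarrow> (nat \<Rightarrow> nat)) set" where
  "delta_kernel n = {g \<in> stab_e n. \<forall>D\<in>Delta n. g ` D = D}"

end

theory Submission
  imports Defs
begin

definition is3 :: "(nat \<Rightarrow> nat) \<Rightarrow> bool" where
  "is3 p \<longleftrightarrow> (\<exists>i j k. i \<noteq> j \<and> j \<noteq> k \<and> i \<noteq> k \<and> p = cyc3 i j k)"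

lemma cyc3_rot: "i \<noteq> j \<Longrightarrow> j \<noteq> k \<Longrightarrow> i \<noteq> k \<Longrightarrow> cyc3 i j k = cyc3 j k i"
  by (auto simp: cyc3_def fun_eq_iff)

lemma cyc3_inv: "i \<noteq> j \<Longrightarrow> j \<noteq> k \<Longrightarrow> i \<noteq> k \<Longrightarrow> cyc3 i k j \<circ> cyc3 i j k = id"
  by (auto simp: cyc3_def fun_eq_iff)

lemma cyc3_transp: "i \<noteq> j \<Longrightarrow> j \<noteq> k \<Longrightarrow> i \<noteq> k \<Longrightarrow> cyc3 i j k = transpose i j \<circ> transpose j k"
  by (auto simp: cyc3_def fun_eq_iff transpose_def)

lemma cyc3_permutes: "i \<in> X \<Longrightarrow> j \<in> X \<Longrightarrow> k \<in> X \<Longrightarrow> i \<noteq> j \<Longrightarrow> j \<noteq> k \<Longrightarrow> i \<noteq> k \<Longrightarrow> cyc3 i j k permutes X"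
  by (simp add: cyc3_transp permutes_compose permutes_swap_id)

lemma cyc3_even: "i \<noteq> j \<Longrightarrow> j \<noteq> k \<Longrightarrow> i \<noteq> k \<Longrightarrow> evenperm (cyc3 i j k)"
  by (simp add: cyc3_transp evenperm_comp permutation_swap_id evenperm_swap)

lemma cyc3_bij: "i \<noteq> j \<Longrightarrow> j \<noteq> k \<Longrightarrow> i \<noteq> k \<Longrightarrow> bij (cyc3 i j k)"
  by (simp add: cyc3_transp bij_comp)

lemma is3_bij: "is3 p \<Longrightarrow> bij p"
  using cyc3_bij is3_def by auto

lemma is3_no2: "is3 p \<Longrightarrow> p x = y \<Longrightarrow> p y = x \<Longrightarrow> x \<noteq> y \<Longrightarrow> False"
  unfolding is3_def cyc3_def by (auto split: if_splits)

lemma is3_cyc3: "i \<noteq> j \<Longrightarrow> j \<noteq> k \<Longrightarrow> i \<noteq> k \<Longrightarrow> is3 (cyc3 i j k)"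
  unfolding is3_def by blast

lemma is3_rev: "is3 p \<Longrightarrow> \<exists>q. is3 q \<and> q \<circ> p = id \<and> p \<circ> q = id"
proof -
  assume "is3 p"
  then obtain i j k where d: "i \<noteq> j" "j \<noteq> k" "i \<noteq> k" and p: "p = cyc3 i j k"
    unfolding is3_def by blast
  show ?thesis
    apply (rule exI[of _ "cyc3 i k j"])
    using d by (simp add: p is3_cyc3) (auto simp: cyc3_def fun_eq_iff)
qed

definition Mv :: "(nat \<Rightarrow> nat) \<Rightarrow> nat set" where "Mv p = {x. p x \<noteq> x}"

lemma Mv_cyc3: "i \<noteq> j \<Longrightarrow> j \<noteq> k \<Longrightarrow> i \<noteq> k \<Longrightarrow> Mv (cyc3 i j k) = {i,j,k}"
  by (auto simp: Mv_def cyc3_def)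

lemma is3_card: "is3 p \<Longrightarrow> finite (Mv p) \<and> card (Mv p) = 3"
  unfolding is3_def by (auto simp: Mv_cyc3)

lemma bij_Mv_closed: "bij p \<Longrightarrow> v \<in> Mv p \<Longrightarrow> p v \<in> Mv p"
  unfolding Mv_def by (auto dest: bij_is_inj simp: inj_eq)

lemma card3_is3:
  assumes b: "bij p" and c: "card (Mv p) = 3"
  shows "is3 p"
proof -
  obtain x y z where M: "Mv p = {x,y,z}" and d: "x \<noteq> y" "y \<noteq> z" "x \<noteq> z"
    using c by (auto simp: card_3_iff)
  have cl: "\<And>v. v \<in> {x,y,z} \<Longrightarrow> p v \<in> {x,y,z}" using bij_Mv_closed[OF b] M by blast
  have mv: "\<And>v. v \<in> {x,y,z} \<Longrightarrow> p v \<noteq> v" using M unfolding Mv_def by blast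
  have fx: "\<And>v. v \<notin> {x,y,z} \<Longrightarrow> p v = v" using M unfolding Mv_def by blast
  have inj: "\<And>u v. p u = p v \<Longrightarrow> u = v" using b by (auto dest: bij_is_inj simp: inj_eq)
  have px: "p x \<in> {y,z}" using cl[of x] mv[of x] by auto
  have py: "p y \<in> {x,z}" using cl[of y] mv[of y] by auto
  have pz: "p z \<in> {x,y}" using cl[of z] mv[of z] by auto
  have "p = cyc3 x y z \<or> p = cyc3 x z y"
  proof (cases "p x = y")
    case True
    then have "p y = z" using py pz px inj d by fastforce
    then have "p z = x" using True pz inj d by fastforce
    then show ?thesis using True \<open>p y = z\<close> fx by (auto simp: fun_eq_iff cyc3_def)
  next
    case False
    then have "p x = z" using px by auto
    then have "p z = y" using pz py inj d by fastforce
    then have "p y = x" using \<open>p x = z\<close> py inj d by fastforce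
    then show ?thesis using \<open>p x = z\<close> \<open>p z = y\<close> fx by (auto simp: fun_eq_iff cyc3_def)
  qed
  then show ?thesis using d is3_cyc3 by auto
qed

lemma is3_iff_count:
  assumes "bij p" "Mv p \<subseteq> set L" "distinct L"
  shows "is3 p \<longleftrightarrow> length (filter (\<lambda>x. p x \<noteq> x) L) = 3"
proof -
  have "set (filter (\<lambda>x. p x \<noteq> x) L) = Mv p" using assms(2) by (auto simp: Mv_def)
  then have "length (filter (\<lambda>x. p x \<noteq> x) L) = card (Mv p)"
    using assms(3) by (metis distinct_card distinct_filter)
  then show ?thesis using is3_card card3_is3 assms(1) by metis
qed

lemma Mv_sub:
  assumes w: "is3 w" and wk: "is3 (w \<circ> k)" and c: "card (Mv k) \<ge> 5"
  shows "Mv w \<subseteq> Mv k"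
proof (rule ccontr)
  assume "\<not> Mv w \<subseteq> Mv k"
  then obtain x where x: "x \<in> Mv w" "x \<notin> Mv k" by blast
  have fk: "finite (Mv k)" using c card.infinite by fastforce
  have fw: "finite (Mv w)" "card (Mv w) = 3" using is3_card[OF w] by auto
  have inj: "\<And>u v. w u = w v \<Longrightarrow> u = v" using is3_bij[OF w] by (auto dest: bij_is_inj simp: inj_eq)
  have sub: "insert x (Mv k - Mv w) \<subseteq> Mv (w \<circ> k)"
  proof
    fix v assume "v \<in> insert x (Mv k - Mv w)"
    then show "v \<in> Mv (w \<circ> k)"
    proof
      assume "v = x" then show ?thesis using x by (auto simp: Mv_def)
    next
      assume v: "v \<in> Mv k - Mv w"
      then have "w v = v" "k v \<noteq> v" by (auto simp: Mv_def)
      then have "w (k v) \<noteq> v" using inj by metis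
      then show ?thesis by (auto simp: Mv_def)
    qed
  qed
  have "Mv w \<inter> Mv k \<subseteq> Mv w - {x}" using x by auto
  then have "card (Mv w \<inter> Mv k) \<le> 2" using fw x
    by (metis card_Diff_singleton card_mono finite_Diff diff_Suc_1 eval_nat_numeral(3) numeral_2_eq_2)
  moreover have "card (Mv k - Mv w) = card (Mv k) - card (Mv k \<inter> Mv w)"
    using fk card_Diff_subset_Int by (metis Int_lower1 card_Diff_subset finite_subset Diff_Diff_Int) 
  ultimately have "card (Mv k - Mv w) \<ge> 3" using c by (simp add: Int_commute)
  then have "card (insert x (Mv k - Mv w)) \<ge> 4" using fk x by simp
  moreover have "card (insert x (Mv k - Mv w)) \<le> 3"
    using card_mono[OF _ sub] is3_card[OF wk] by simp
  ultimately show False by simp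
qed

abbreviation AG where "AG n \<equiv> alt_grp n"

definition E :: "(nat \<Rightarrow> nat) \<Rightarrow> (nat \<Rightarrow> nat) \<Rightarrow> bool" where
  "E x y \<longleftrightarrow> (\<exists>t. is3 t \<and> y = t \<circ> x)"

lemma AG_perm: "x \<in> AG n \<Longrightarrow> x permutes {1..n}" by (simp add: alt_grp_def)

lemma AG_id: "id \<in> AG n" by (simp add: alt_grp_def permutes_id)

lemma AG_comp: "x \<in> AG n \<Longrightarrow> y \<in> AG n \<Longrightarrow> x \<circ> y \<in> AG n"
proof -
  assume a: "x \<in> AG n" "y \<in> AG n"
  have p: "permutation x" "permutation y" using a unfolding alt_grp_def permutation_permutes by blast+
  show ?thesis using a evenperm_comp[OF p] permutes_compose[of y "{1..n}" x] unfolding alt_grp_def by simp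
qed

lemma AG_inv: "x \<in> AG n \<Longrightarrow> inv x \<in> AG n"
proof -
  assume a: "x \<in> AG n"
  have p: "permutation x" using a unfolding alt_grp_def permutation_permutes by blast
  show ?thesis using a evenperm_inv[OF p] permutes_inv[of x "{1..n}"] unfolding alt_grp_def by simp
qed

lemma AG_bij: "x \<in> AG n \<Longrightarrow> bij x" using AG_perm permutes_bij by blast

lemma AG_inv_o: "x \<in> AG n \<Longrightarrow> x \<circ> inv x = id \<and> inv x \<circ> x = id"
  using AG_perm permutes_inv_o by blast

lemma cyc3_AG: "i \<in> {1..n} \<Longrightarrow> j \<in> {1..n} \<Longrightarrow> k \<in> {1..n} \<Longrightarrow> i \<noteq> j \<Longrightarrow> j \<noteq> k \<Longrightarrow> i \<noteq> k
   \<Longrightarrow> cyc3 i j k \<in> AG n"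
  unfolding alt_grp_def using cyc3_permutes cyc3_even by auto

lemma three_AG: "t \<in> three_cycles n \<Longrightarrow> t \<in> AG n \<and> is3 t"
  unfolding three_cycles_def using cyc3_AG is3_cyc3 by auto

lemma is3_three: "is3 t \<Longrightarrow> t permutes {1..n} \<Longrightarrow> t \<in> three_cycles n"
proof -
  assume a: "is3 t" "t permutes {1..n}"
  then obtain i j k where d: "i \<noteq> j" "j \<noteq> k" "i \<noteq> k" and t: "t = cyc3 i j k"
    unfolding is3_def by blast
  have "t i \<noteq> i" "t j \<noteq> j" "t k \<noteq> k" using d by (auto simp: t cyc3_def)
  then have "i \<in> {1..n}" "j \<in> {1..n}" "k \<in> {1..n}" using permutes_not_in[OF a(2)] by metis+
  then show ?thesis unfolding three_cycles_def using d t by blast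
qed

lemma is3_AG_three: "is3 t \<Longrightarrow> t \<in> AG n \<Longrightarrow> t \<in> three_cycles n"
  using is3_three AG_perm by blast

lemma E_three: "x \<in> AG n \<Longrightarrow> y \<in> AG n \<Longrightarrow> y = t \<circ> x \<Longrightarrow> is3 t \<Longrightarrow> t \<in> three_cycles n"
proof -
  assume a: "x \<in> AG n" "y \<in> AG n" "y = t \<circ> x" "is3 t"
  have "t = y \<circ> inv x" using a(3) AG_inv_o[OF a(1)] by (simp add: o_assoc[symmetric])
  then have "t \<in> AG n" using AG_comp[OF a(2) AG_inv[OF a(1)]] by simp
  then show ?thesis using is3_AG_three a by blast
qed

lemma adj_iff: "x \<in> AG n \<Longrightarrow> y \<in> AG n \<Longrightarrow> cag_adj n x y \<longleftrightarrow> E x y"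
proof
  assume a: "x \<in> AG n" "y \<in> AG n" "cag_adj n x y"
  then obtain t where t: "t \<in> three_cycles n" "y = t \<circ> x \<or> x = t \<circ> y" unfolding cag_adj_def by blast
  have "is3 t" using three_AG t by blast
  from t(2) show "E x y"
  proof
    assume "y = t \<circ> x" then show ?thesis using \<open>is3 t\<close> E_def by blast
  next
    assume "x = t \<circ> y"
    obtain q where q: "is3 q" "q \<circ> t = id" using is3_rev[OF \<open>is3 t\<close>] by blast
    have "y = q \<circ> x" using q \<open>x = t \<circ> y\<close> by (simp add: o_assoc)
    then show ?thesis using q E_def by blast
  qed
next
  assume a: "x \<in> AG n" "y \<in> AG n" "E x y"
  then obtain t where "is3 t" "y = t \<circ> x" unfolding E_def by blast
  then show "cag_adj n x y" using E_three[OF a(1,2)] unfolding cag_adj_def by blast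
qed

lemma E_sym: "E x y \<Longrightarrow> E y x"
proof -
  assume "E x y"
  then obtain t where t: "is3 t" "y = t \<circ> x" unfolding E_def by blast
  obtain q where q: "is3 q" "q \<circ> t = id" using is3_rev[OF t(1)] by blast
  have "x = q \<circ> y" using q t by (simp add: o_assoc)
  then show ?thesis using q E_def by blast
qed

definition aut :: "nat \<Rightarrow> ((nat \<Rightarrow> nat) \<Rightarrow> (nat \<Rightarrow> nat)) \<Rightarrow> bool" where
  "aut n h \<longleftrightarrow> (\<forall>x\<in>AG n. h x \<in> AG n) \<and> inj_on h (AG n) \<and>
     (\<forall>x\<in>AG n. \<forall>y\<in>AG n. E x y \<longleftrightarrow> E (h x) (h y))"

definition fixN :: "nat \<Rightarrow> ((nat \<Rightarrow> nat) \<Rightarrow> (nat \<Rightarrow> nat)) \<Rightarrow> bool" where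
  "fixN n h \<longleftrightarrow> h id = id \<and> (\<forall>t\<in>three_cycles n. h t = t)"

lemma cag_aut_aut: "g \<in> cag_aut n \<Longrightarrow> aut n g"
proof -
  assume g: "g \<in> cag_aut n"
  have m: "\<forall>x\<in>AG n. g x \<in> AG n" using g unfolding cag_aut_def by (auto simp: PiE_def Pi_def)
  have i: "inj_on g (AG n)" using g unfolding cag_aut_def by (auto dest: bij_betw_imp_inj_on)
  have a: "\<forall>x\<in>AG n. \<forall>y\<in>AG n. cag_adj n x y \<longleftrightarrow> cag_adj n (g x) (g y)" using g unfolding cag_aut_def by blast
  have "\<forall>x\<in>AG n. \<forall>y\<in>AG n. E x y \<longleftrightarrow> E (g x) (g y)"
  proof (intro ballI)
    fix x y assume xy: "x \<in> AG n" "y \<in> AG n"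
    then have "g x \<in> AG n" "g y \<in> AG n" using m by auto
    then show "E x y \<longleftrightarrow> E (g x) (g y)" using a xy adj_iff by metis
  qed
  then show ?thesis using m i unfolding aut_def by blast
qed

lemma conj_cyc3:
  assumes b: "bij s"
  shows "s \<circ> cyc3 i j k \<circ> inv s = cyc3 (s i) (s j) (s k)"
proof
  fix x
  obtain u where u: "x = s u" using b by (metis bij_pointE)
  have inj: "\<And>a c. s a = s c \<longleftrightarrow> a = c" using b by (auto dest: bij_is_inj simp: inj_eq)
  show "(s \<circ> cyc3 i j k \<circ> inv s) x = cyc3 (s i) (s j) (s k) x"
    by (simp add: u cyc3_def inj inv_f_f[OF bij_is_inj[OF b]])
qed

definition cj :: "(nat \<Rightarrow> nat) \<Rightarrow> (nat \<Rightarrow> nat) \<Rightarrow> (nat \<Rightarrow> nat)" where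
  "cj s x = s \<circ> x \<circ> inv s"

lemma cj_AG:
  assumes s: "s permutes {1..n}" and x: "x \<in> AG n"
  shows "cj s x \<in> AG n"
proof -
  have ps: "permutation s" "permutation (inv s)" using s permutation_permutes permutes_inv by blast+
  have px: "permutation x" using x unfolding alt_grp_def permutation_permutes by blast
  have "permutation (x \<circ> inv s)" using ps px permutation_compose by blast
  then have "evenperm (s \<circ> (x \<circ> inv s)) = evenperm x"
    using evenperm_comp[OF ps(1)] evenperm_comp[OF px ps(2)] evenperm_inv[OF ps(1)] by (cases "evenperm s"; simp)
  moreover have "s \<circ> (x \<circ> inv s) permutes {1..n}"
    using s x AG_perm permutes_compose permutes_inv by blast
  ultimately show ?thesis using x unfolding alt_grp_def cj_def by (simp add: o_assoc)
qed

lemma cj_cj: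
  assumes s: "s permutes {1..n}"
  shows "cj (inv s) (cj s x) = x" "cj s (cj (inv s) x) = x"
  unfolding cj_def using permutes_inv_o[OF s] permutes_inv_inv[OF s]
  by (simp_all add: o_assoc) (simp_all add: o_assoc[symmetric])

lemma cj_comp:
  assumes s: "s permutes {1..n}"
  shows "cj s (x \<circ> y) = cj s x \<circ> cj s y"
proof -
  have "s \<circ> (x \<circ> y) \<circ> inv s = s \<circ> x \<circ> (inv s \<circ> s) \<circ> y \<circ> inv s"
    using permutes_inv_o[OF s] by (simp add: o_assoc)
  then show ?thesis unfolding cj_def by (simp add: o_assoc)
qed

lemma cj_cyc3:
  assumes s: "s permutes {1..n}"
  shows "cj s (cyc3 i j k) = cyc3 (s i) (s j) (s k)"
  unfolding cj_def using conj_cyc3 permutes_bij[OF s] by blast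

lemma cj_is3:
  assumes s: "s permutes {1..n}" and t: "is3 t"
  shows "is3 (cj s t)"
proof -
  obtain i j k where d: "i \<noteq> j" "j \<noteq> k" "i \<noteq> k" and tt: "t = cyc3 i j k" using t unfolding is3_def by blast
  have inj: "\<And>a c. s a = s c \<longleftrightarrow> a = c" using permutes_inj[OF s] by (auto simp: inj_eq)
  show ?thesis using d inj by (simp add: tt cj_cyc3[OF s] is3_cyc3)
qed

lemma cj_E:
  assumes s: "s permutes {1..n}" and e: "E x y"
  shows "E (cj s x) (cj s y)"
proof -
  obtain t where t: "is3 t" "y = t \<circ> x" using e unfolding E_def by blast
  then have "cj s y = cj s t \<circ> cj s x" using cj_comp[OF s] by simp
  then show ?thesis using cj_is3[OF s t(1)] unfolding E_def by blast
qed

lemma cj_id: "s permutes X \<Longrightarrow> cj s id = id"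
  unfolding cj_def using permutes_inv_o by simp

lemma cj_three:
  assumes s: "s permutes {1..n}" and t: "t \<in> three_cycles n"
  shows "cj s t \<in> three_cycles n"
  using three_AG[OF t] cj_AG[OF s] cj_is3[OF s] is3_AG_three by blast

definition hcj where "hcj s h = (\<lambda>x. cj (inv s) (h (cj s x)))"

lemma hcj_aut:
  assumes s: "s permutes {1..n}" and h: "aut n h" "fixN n h"
  shows "aut n (hcj s h) \<and> fixN n (hcj s h)"
proof -
  have si: "inv s permutes {1..n}" using permutes_inv[OF s] .
  have m: "\<forall>x\<in>AG n. hcj s h x \<in> AG n"
    using h(1) cj_AG[OF s] cj_AG[OF si] unfolding aut_def hcj_def by blast
  have i: "inj_on (hcj s h) (AG n)"
  proof (rule inj_onI)
    fix x y assume xy: "x \<in> AG n" "y \<in> AG n" "hcj s h x = hcj s h y"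
    then have "cj s (hcj s h x) = cj s (hcj s h y)" by simp
    then have "h (cj s x) = h (cj s y)" unfolding hcj_def using cj_cj(2)[OF s] by simp
    then have "cj s x = cj s y" using h(1) cj_AG[OF s] xy(1,2) unfolding aut_def inj_on_def by blast
    then have "cj (inv s) (cj s x) = cj (inv s) (cj s y)" by simp
    then show "x = y" using cj_cj(1)[OF s] by simp
  qed
  have e: "\<forall>x\<in>AG n. \<forall>y\<in>AG n. E x y \<longleftrightarrow> E (hcj s h x) (hcj s h y)"
  proof (intro ballI)
    fix x y assume xy: "x \<in> AG n" "y \<in> AG n"
    have c: "cj s x \<in> AG n" "cj s y \<in> AG n" using cj_AG[OF s] xy by auto
    have "E x y \<longleftrightarrow> E (cj s x) (cj s y)"
    proof
      assume "E x y" then show "E (cj s x) (cj s y)" using cj_E[OF s] by blast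
    next
      assume "E (cj s x) (cj s y)"
      then have "E (cj (inv s) (cj s x)) (cj (inv s) (cj s y))" using cj_E[OF si] by blast
      then show "E x y" using cj_cj(1)[OF s] by simp
    qed
    also have "\<dots> \<longleftrightarrow> E (h (cj s x)) (h (cj s y))" using h(1) c unfolding aut_def by blast
    also have "\<dots> \<longleftrightarrow> E (hcj s h x) (hcj s h y)"
    proof
      assume "E (h (cj s x)) (h (cj s y))"
      then show "E (hcj s h x) (hcj s h y)" unfolding hcj_def using cj_E[OF si] by blast
    next
      assume "E (hcj s h x) (hcj s h y)"
      then have "E (cj s (hcj s h x)) (cj s (hcj s h y))" using cj_E[OF s] by blast
      then show "E (h (cj s x)) (h (cj s y))" unfolding hcj_def using cj_cj(2)[OF s] by simp
    qed
    finally show "E x y \<longleftrightarrow> E (hcj s h x) (hcj s h y)" .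
  qed
  have f1: "hcj s h id = id" using h(2) cj_id[OF s] cj_id[OF si] unfolding hcj_def fixN_def by simp
  have f2: "\<forall>t\<in>three_cycles n. hcj s h t = t"
    using h(2) cj_three[OF s] cj_cj(1)[OF s] unfolding hcj_def fixN_def by simp
  show ?thesis using m i e f1 f2 unfolding aut_def fixN_def by blast
qed

lemma hcj_transfer:
  assumes s: "s permutes {1..n}" and "hcj s h z = z"
  shows "h (cj s z) = cj s z"
proof -
  have "cj s (hcj s h z) = cj s z" using assms by simp
  then show ?thesis unfolding hcj_def using cj_cj(2)[OF s] by simp
qed

lemma exists_perm:
  "distinct P \<Longrightarrow> set P \<subseteq> {1..n} \<Longrightarrow> \<exists>s. s permutes {1..n} \<and> (\<forall>l < length P. s (Suc l) = P ! l)"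
proof (induction P rule: rev_induct)
  case Nil
  show ?case by (intro exI[of _ id] conjI permutes_id) simp
next
  case (snoc p Q)
  have "distinct Q" "set Q \<subseteq> {1..n}" using snoc.prems by simp_all
  then obtain s where s: "s permutes {1..n}" "\<forall>l < length Q. s (Suc l) = Q ! l" using snoc.IH by blast
  let ?m = "length Q"
  have "card (set (Q @ [p])) \<le> card {1..n}" using card_mono[OF finite_atLeastAtMost snoc.prems(2)] .
  moreover have "card (set (Q @ [p])) = Suc ?m" using distinct_card[OF snoc.prems(1)] by simp
  ultimately have mn: "Suc ?m \<in> {1..n}" by simp
  define u where "u = inv s p"
  have pn: "p \<in> {1..n}" using snoc.prems(2) by simp
  have u: "u \<in> {1..n}" "s u = p" unfolding u_def
    using permutes_in_image[OF permutes_inv[OF s(1)]] pn apply blast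
    using permutes_inverses(1)[OF s(1)] by blast
  let ?s = "s \<circ> transpose (Suc ?m) u"
  have sp: "?s permutes {1..n}" using permutes_compose[OF permutes_swap_id[OF mn u(1)] s(1)] .
  have "\<forall>l < length (Q @ [p]). ?s (Suc l) = (Q @ [p]) ! l"
  proof (intro allI impI)
    fix l assume l: "l < length (Q @ [p])"
    show "?s (Suc l) = (Q @ [p]) ! l"
    proof (cases "l = ?m")
      case True then show ?thesis using u by (simp add: nth_append)
    next
      case False
      then have lm: "l < ?m" using l by simp
      have "s (Suc l) = Q ! l" using s(2) lm by blast
      moreover have "Q ! l \<noteq> p" using snoc.prems(1) lm by (auto simp: nth_mem)
      ultimately have "Suc l \<noteq> u" using u(2) by auto
      then show ?thesis using lm s(2) by (simp add: nth_append transpose_def)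
    qed
  qed
  then show ?case using sp by blast
qed

lemma Mv_comp: "Mv (p \<circ> q) \<subseteq> Mv p \<union> Mv q"
  by (auto simp: Mv_def)

lemma aut_E: "aut n h \<Longrightarrow> x \<in> AG n \<Longrightarrow> y \<in> AG n \<Longrightarrow> E x y \<Longrightarrow> E (h x) (h y)"
  unfolding aut_def by blast

lemma pattern:
  assumes h: "aut n h" "fixN n h"
    and z: "z \<in> AG n" and a: "a \<in> AG n" "h a = a" and b: "b \<in> AG n" "h b = b" "b \<circ> b' = id"
    and c: "c \<in> AG n" "h c = c" "c \<circ> c' = id"
    and e: "E a z" "E b z" "E c z"
    and card: "card (Mv (a \<circ> b')) \<ge> 5" "Mv (a \<circ> b') \<subseteq> set L" "Mv (a \<circ> c') \<subseteq> set L"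
       "Mv a \<subseteq> set L" "distinct L"
    and bij: "bij b'" "bij c'"
    and enum: "\<And>q r s. q \<in> set L \<Longrightarrow> r \<in> set L \<Longrightarrow> s \<in> set L \<Longrightarrow> q \<noteq> r \<Longrightarrow> r \<noteq> s \<Longrightarrow> q \<noteq> s \<Longrightarrow>
        length (filter (\<lambda>x. (cyc3 q r s \<circ> (a \<circ> b')) x \<noteq> x) L) = 3 \<Longrightarrow>
        length (filter (\<lambda>x. (cyc3 q r s \<circ> (a \<circ> c')) x \<noteq> x) L) = 3 \<Longrightarrow>
        cyc3 q r s \<circ> a = z \<or> cyc3 q r s \<circ> a = id \<or> length (filter (\<lambda>x. (cyc3 q r s \<circ> a) x \<noteq> x) L) = 3"
  shows "h z = z"
proof -
  have hA: "\<forall>x\<in>AG n. h x \<in> AG n" and inj: "inj_on h (AG n)" using h(1) unfolding aut_def by blast+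
  define y where "y = h z"
  have y: "y \<in> AG n" using hA z y_def by blast
  have ea: "E a y" using aut_E[OF h(1) a(1) z e(1)] a(2) y_def by simp
  have eb: "E b y" using aut_E[OF h(1) b(1) z e(2)] b(2) y_def by simp
  have ec: "E c y" using aut_E[OF h(1) c(1) z e(3)] c(2) y_def by simp
  obtain w where w: "is3 w" "y = w \<circ> a" using ea unfolding E_def by blast
  obtain w2 where w2: "is3 w2" "y = w2 \<circ> b" using eb unfolding E_def by blast
  obtain w3 where w3: "is3 w3" "y = w3 \<circ> c" using ec unfolding E_def by blast
  have "w2 = y \<circ> b'" using w2(2) b(3) by (simp add: o_assoc[symmetric])
  then have wb: "is3 (w \<circ> (a \<circ> b'))" using w2(1) w(2) by (simp add: o_assoc)
  have "w3 = y \<circ> c'" using w3(2) c(3) by (simp add: o_assoc[symmetric])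
  then have wc: "is3 (w \<circ> (a \<circ> c'))" using w3(1) w(2) by (simp add: o_assoc)
  have mw: "Mv w \<subseteq> set L" using Mv_sub[OF w(1) wb card(1)] card(2) by blast
  obtain q r s where d: "q \<noteq> r" "r \<noteq> s" "q \<noteq> s" and wq: "w = cyc3 q r s" using w(1) unfolding is3_def by blast
  have qrs: "q \<in> set L" "r \<in> set L" "s \<in> set L" using mw Mv_cyc3[OF d] wq by auto
  have bw: "bij w" using is3_bij[OF w(1)] .
  have ba: "bij a" using AG_bij[OF a(1)] .
  have bwb: "bij (w \<circ> (a \<circ> b'))" using bw ba bij by (intro bij_comp)
  have bwc: "bij (w \<circ> (a \<circ> c'))" using bw ba bij by (intro bij_comp)
  have bwa: "bij (w \<circ> a)" using bw ba by (intro bij_comp)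
  have mwb: "Mv (w \<circ> (a \<circ> b')) \<subseteq> set L" using mw card(2) Mv_comp[of w "a \<circ> b'"] by blast
  have mwc: "Mv (w \<circ> (a \<circ> c')) \<subseteq> set L" using mw card(3) Mv_comp[of w "a \<circ> c'"] by blast
  have mwa: "Mv (w \<circ> a) \<subseteq> set L" using mw card(4) Mv_comp[of w a] by blast
  have c1: "length (filter (\<lambda>x. (w \<circ> (a \<circ> b')) x \<noteq> x) L) = 3"
    using is3_iff_count[OF bwb mwb card(5)] wb by blast
  have c2: "length (filter (\<lambda>x. (w \<circ> (a \<circ> c')) x \<noteq> x) L) = 3"
    using is3_iff_count[OF bwc mwc card(5)] wc by blast
  have "w \<circ> a = z \<or> w \<circ> a = id \<or> length (filter (\<lambda>x. (w \<circ> a) x \<noteq> x) L) = 3"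
    using enum[OF qrs d] c1 c2 unfolding wq by blast
  then have yy: "y = z \<or> y = id \<or> is3 y"
    using w(2) is3_iff_count[OF bwa mwa card(5)] by blast
  have "y = id \<Longrightarrow> h z = z"
    using h(2) inj AG_id z unfolding fixN_def y_def inj_on_def by metis
  moreover have "is3 y \<Longrightarrow> h z = z"
  proof -
    assume "is3 y"
    then have "y \<in> three_cycles n" using is3_AG_three y by blast
    then have "h y = y" using h(2) unfolding fixN_def by blast
    then have "y = z" using inj y z unfolding inj_on_def y_def by metis
    then show ?thesis using y_def by simp
  qed
  moreover have "y = z \<Longrightarrow> h z = z" unfolding y_def by simp
  ultimately show ?thesis using yy by blast
qed

lemma Mv_card_ge:
  assumes "set L' \<subseteq> Mv p" "distinct L'" "Mv p \<subseteq> set L"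
  shows "card (Mv p) \<ge> length L'"
proof -
  have "finite (Mv p)" using assms(3) finite_subset by blast
  then show ?thesis using card_mono[OF _ assms(1)] distinct_card[OF assms(2)] by simp
qed

lemma three_of: "is3 t \<Longrightarrow> t \<in> AG n \<Longrightarrow> t \<in> three_cycles n" using is3_AG_three by blast

lemma fix_cyc3: "fixN n h \<Longrightarrow> i \<in> {1..n} \<Longrightarrow> j \<in> {1..n} \<Longrightarrow> k \<in> {1..n} \<Longrightarrow> i \<noteq> j \<Longrightarrow> j \<noteq> k \<Longrightarrow> i \<noteq> k
  \<Longrightarrow> h (cyc3 i j k) = cyc3 i j k"
  unfolding fixN_def using three_of cyc3_AG is3_cyc3 by blast

lemma T1c:
  assumes h: "aut n h" "fixN n h" and n: "n \<ge> 6"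
  shows "h (cyc3 1 2 3 \<circ> cyc3 4 5 6) = cyc3 1 2 3 \<circ> cyc3 4 5 6"
proof (rule pattern[OF h, where a="cyc3 1 2 3" and b="cyc3 4 5 6" and b'="cyc3 4 6 5" and c="cyc3 1 2 3"
      and c'="cyc3 1 3 2" and L="[1,2,3,4,5,6]"])
  have r: "(1::nat) \<in> {1..n}" "(2::nat) \<in> {1..n}" "(3::nat) \<in> {1..n}" "(4::nat) \<in> {1..n}" "(5::nat) \<in> {1..n}" "(6::nat) \<in> {1..n}"
    using n by auto
  show a: "cyc3 1 2 3 \<in> AG n" "cyc3 4 5 6 \<in> AG n" using r by (auto intro!: cyc3_AG)
  then show "cyc3 1 2 3 \<circ> cyc3 4 5 6 \<in> AG n" by (rule AG_comp)
  show "h (cyc3 1 2 3) = cyc3 1 2 3" "h (cyc3 4 5 6) = cyc3 4 5 6" "h (cyc3 1 2 3) = cyc3 1 2 3"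
    using fix_cyc3[OF h(2)] r by auto
  show "cyc3 1 2 3 \<in> AG n" using a(1) .
  show "cyc3 4 5 6 \<circ> cyc3 4 6 5 = id" "cyc3 1 2 3 \<circ> cyc3 1 3 2 = id" by (auto simp: fun_eq_iff cyc3_def)
  show "E (cyc3 1 2 3) (cyc3 1 2 3 \<circ> cyc3 4 5 6)"
    unfolding E_def by (rule exI[of _ "cyc3 4 5 6"], rule conjI, simp add: is3_cyc3, auto simp: fun_eq_iff cyc3_def)
  then show "E (cyc3 1 2 3) (cyc3 1 2 3 \<circ> cyc3 4 5 6)" .
  show "E (cyc3 4 5 6) (cyc3 1 2 3 \<circ> cyc3 4 5 6)"
    unfolding E_def by (rule exI[of _ "cyc3 1 2 3"]) (auto simp: is3_cyc3)
  show mk: "Mv (cyc3 1 2 3 \<circ> cyc3 4 6 5) \<subseteq> set [1,2,3,4,5,6]" "Mv (cyc3 1 2 3 \<circ> cyc3 1 3 2) \<subseteq> set [1,2,3,4,5,6]"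
    "Mv (cyc3 1 2 3) \<subseteq> set [1,2,3,4,5,6]" by (auto simp: Mv_def cyc3_def split: if_splits)
  show "distinct [1,2,3,4,5,6::nat]" by simp
  show "bij (cyc3 4 6 5)" "bij (cyc3 1 3 2)" by (auto intro: cyc3_bij)
  show "card (Mv (cyc3 1 2 3 \<circ> cyc3 4 6 5)) \<ge> 5"
  proof -
    have "set [1,2,3,4,5] \<subseteq> Mv (cyc3 1 2 3 \<circ> cyc3 4 6 5)" by (simp add: Mv_def cyc3_def)
    from Mv_card_ge[OF this _ mk(1)] show ?thesis by simp
  qed
next
  fix q r s :: nat
  assume q: "q \<in> set [1,2,3,4,5,6]" and r: "r \<in> set [1,2,3,4,5,6]" and s: "s \<in> set [1,2,3,4,5,6]"
    and qrs: "q \<noteq> r" "r \<noteq> s" "q \<noteq> s"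
    and c1: "length (filter (\<lambda>x. (cyc3 q r s \<circ> (cyc3 1 2 3 \<circ> cyc3 4 6 5)) x \<noteq> x) [1,2,3,4,5,6]) = 3"
  show "cyc3 q r s \<circ> cyc3 1 2 3 = cyc3 1 2 3 \<circ> cyc3 4 5 6 \<or> cyc3 q r s \<circ> cyc3 1 2 3 = id \<or>
        length (filter (\<lambda>x. (cyc3 q r s \<circ> cyc3 1 2 3) x \<noteq> x) [1,2,3,4,5,6]) = 3"
    using q r s qrs c1
    apply (simp only: set_simps insert_iff empty_iff)
    apply (elim disjE)
    apply (simp_all add: cyc3_def)
    apply (auto simp: fun_eq_iff cyc3_def)
    done
qed

lemma T2c:
  assumes h: "aut n h" "fixN n h" and n: "n \<ge> 5"
  shows "h (cyc3 3 1 2 \<circ> cyc3 3 4 5) = cyc3 3 1 2 \<circ> cyc3 3 4 5"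
proof (rule pattern[OF h, where a="cyc3 1 4 5" and b="cyc3 2 3 4" and b'="cyc3 2 4 3" and c="cyc3 1 2 3"
      and c'="cyc3 1 3 2" and L="[1,2,3,4,5]"])
  have r: "(1::nat) \<in> {1..n}" "(2::nat) \<in> {1..n}" "(3::nat) \<in> {1..n}" "(4::nat) \<in> {1..n}" "(5::nat) \<in> {1..n}"
    using n by auto
  show a: "cyc3 1 4 5 \<in> AG n" "cyc3 2 3 4 \<in> AG n" "cyc3 1 2 3 \<in> AG n" using r by (auto intro!: cyc3_AG)
  have "cyc3 3 1 2 \<in> AG n" "cyc3 3 4 5 \<in> AG n" using r by (auto intro!: cyc3_AG)
  then show "cyc3 3 1 2 \<circ> cyc3 3 4 5 \<in> AG n" by (rule AG_comp)
  show "h (cyc3 1 4 5) = cyc3 1 4 5" "h (cyc3 2 3 4) = cyc3 2 3 4" "h (cyc3 1 2 3) = cyc3 1 2 3"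
    using fix_cyc3[OF h(2)] r by auto
  show "cyc3 2 3 4 \<circ> cyc3 2 4 3 = id" "cyc3 1 2 3 \<circ> cyc3 1 3 2 = id" by (auto simp: fun_eq_iff cyc3_def)
  show "E (cyc3 1 4 5) (cyc3 3 1 2 \<circ> cyc3 3 4 5)"
    unfolding E_def by (rule exI[of _ "cyc3 2 3 4"], rule conjI, simp add: is3_cyc3, auto simp: fun_eq_iff cyc3_def)
  show "E (cyc3 2 3 4) (cyc3 3 1 2 \<circ> cyc3 3 4 5)"
    unfolding E_def by (rule exI[of _ "cyc3 1 2 5"], rule conjI, simp add: is3_cyc3, auto simp: fun_eq_iff cyc3_def)
  show "E (cyc3 1 2 3) (cyc3 3 1 2 \<circ> cyc3 3 4 5)"
    unfolding E_def by (rule exI[of _ "cyc3 1 4 5"], rule conjI, simp add: is3_cyc3, auto simp: fun_eq_iff cyc3_def)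
  show mk: "Mv (cyc3 1 4 5 \<circ> cyc3 2 4 3) \<subseteq> set [1,2,3,4,5]" "Mv (cyc3 1 4 5 \<circ> cyc3 1 3 2) \<subseteq> set [1,2,3,4,5]"
    "Mv (cyc3 1 4 5) \<subseteq> set [1,2,3,4,5]" by (auto simp: Mv_def cyc3_def split: if_splits)
  show "distinct [1,2,3,4,5::nat]" by simp
  show "bij (cyc3 2 4 3)" "bij (cyc3 1 3 2)" by (auto intro: cyc3_bij)
  show "card (Mv (cyc3 1 4 5 \<circ> cyc3 2 4 3)) \<ge> 5"
  proof -
    have "set [1,2,3,4,5] \<subseteq> Mv (cyc3 1 4 5 \<circ> cyc3 2 4 3)" by (simp add: Mv_def cyc3_def)
    from Mv_card_ge[OF this _ mk(1)] show ?thesis by simp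
  qed
next
  fix q r s :: nat
  assume q: "q \<in> set [1,2,3,4,5]" and r: "r \<in> set [1,2,3,4,5]" and s: "s \<in> set [1,2,3,4,5]"
    and qrs: "q \<noteq> r" "r \<noteq> s" "q \<noteq> s"
    and c1: "length (filter (\<lambda>x. (cyc3 q r s \<circ> (cyc3 1 4 5 \<circ> cyc3 2 4 3)) x \<noteq> x) [1,2,3,4,5]) = 3"
    and c2: "length (filter (\<lambda>x. (cyc3 q r s \<circ> (cyc3 1 4 5 \<circ> cyc3 1 3 2)) x \<noteq> x) [1,2,3,4,5]) = 3"
  show "cyc3 q r s \<circ> cyc3 1 4 5 = cyc3 3 1 2 \<circ> cyc3 3 4 5 \<or> cyc3 q r s \<circ> cyc3 1 4 5 = id \<or>
        length (filter (\<lambda>x. (cyc3 q r s \<circ> cyc3 1 4 5) x \<noteq> x) [1,2,3,4,5]) = 3"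
    using q r s qrs c1 c2
    apply (simp only: set_simps insert_iff empty_iff)
    apply (elim disjE)
    apply (simp_all add: cyc3_def)
    apply (auto simp: fun_eq_iff cyc3_def)
    done
qed

lemma T3c:
  assumes h: "aut n h" "fixN n h" and n: "n \<ge> 5"
    and hb: "h (cyc3 3 1 5 \<circ> cyc3 3 4 2) = cyc3 3 1 5 \<circ> cyc3 3 4 2"
  shows "h (cyc3 1 3 2 \<circ> cyc3 1 3 4) = cyc3 1 3 2 \<circ> cyc3 1 3 4"
proof (rule pattern[OF h, where a="cyc3 1 4 3" and b="cyc3 3 1 5 \<circ> cyc3 3 4 2" and b'="cyc3 3 2 4 \<circ> cyc3 3 5 1"
      and c="cyc3 2 4 3" and c'="cyc3 2 3 4" and L="[1,2,3,4,5]"])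
  have r: "(1::nat) \<in> {1..n}" "(2::nat) \<in> {1..n}" "(3::nat) \<in> {1..n}" "(4::nat) \<in> {1..n}" "(5::nat) \<in> {1..n}"
    using n by auto
  show a: "cyc3 1 4 3 \<in> AG n" "cyc3 2 4 3 \<in> AG n" using r by (auto intro!: cyc3_AG)
  have "cyc3 3 1 5 \<in> AG n" "cyc3 3 4 2 \<in> AG n" using r by (auto intro!: cyc3_AG)
  then show "cyc3 3 1 5 \<circ> cyc3 3 4 2 \<in> AG n" by (rule AG_comp)
  have "cyc3 1 3 2 \<in> AG n" "cyc3 1 3 4 \<in> AG n" using r by (auto intro!: cyc3_AG)
  then show "cyc3 1 3 2 \<circ> cyc3 1 3 4 \<in> AG n" by (rule AG_comp)
  show "h (cyc3 1 4 3) = cyc3 1 4 3" "h (cyc3 2 4 3) = cyc3 2 4 3"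
    using fix_cyc3[OF h(2)] r by auto
  show "h (cyc3 3 1 5 \<circ> cyc3 3 4 2) = cyc3 3 1 5 \<circ> cyc3 3 4 2" by (rule hb)
  show "cyc3 3 1 5 \<circ> cyc3 3 4 2 \<circ> (cyc3 3 2 4 \<circ> cyc3 3 5 1) = id" "cyc3 2 4 3 \<circ> cyc3 2 3 4 = id"
    by (auto simp: fun_eq_iff cyc3_def)
  show "E (cyc3 1 4 3) (cyc3 1 3 2 \<circ> cyc3 1 3 4)"
    unfolding E_def by (rule exI[of _ "cyc3 1 4 2"], rule conjI, simp add: is3_cyc3, auto simp: fun_eq_iff cyc3_def)
  show "E (cyc3 3 1 5 \<circ> cyc3 3 4 2) (cyc3 1 3 2 \<circ> cyc3 1 3 4)"
    unfolding E_def by (rule exI[of _ "cyc3 2 3 5"], rule conjI, simp add: is3_cyc3, auto simp: fun_eq_iff cyc3_def)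
  show "E (cyc3 2 4 3) (cyc3 1 3 2 \<circ> cyc3 1 3 4)"
    unfolding E_def by (rule exI[of _ "cyc3 1 2 4"], rule conjI, simp add: is3_cyc3, auto simp: fun_eq_iff cyc3_def)
  show mk: "Mv (cyc3 1 4 3 \<circ> (cyc3 3 2 4 \<circ> cyc3 3 5 1)) \<subseteq> set [1,2,3,4,5]"
    "Mv (cyc3 1 4 3 \<circ> cyc3 2 3 4) \<subseteq> set [1,2,3,4,5]"
    "Mv (cyc3 1 4 3) \<subseteq> set [1,2,3,4,5]" by (auto simp: Mv_def cyc3_def split: if_splits)
  show "distinct [1,2,3,4,5::nat]" by simp
  show "bij (cyc3 3 2 4 \<circ> cyc3 3 5 1)" "bij (cyc3 2 3 4)" by (auto intro!: cyc3_bij bij_comp)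
  show "card (Mv (cyc3 1 4 3 \<circ> (cyc3 3 2 4 \<circ> cyc3 3 5 1))) \<ge> 5"
  proof -
    have "set [1,2,3,4,5] \<subseteq> Mv (cyc3 1 4 3 \<circ> (cyc3 3 2 4 \<circ> cyc3 3 5 1))" by (simp add: Mv_def cyc3_def)
    from Mv_card_ge[OF this _ mk(1)] show ?thesis by simp
  qed
next
  fix q r s :: nat
  assume q: "q \<in> set [1,2,3,4,5]" and r: "r \<in> set [1,2,3,4,5]" and s: "s \<in> set [1,2,3,4,5]"
    and qrs: "q \<noteq> r" "r \<noteq> s" "q \<noteq> s"
    and c1: "length (filter (\<lambda>x. (cyc3 q r s \<circ> (cyc3 1 4 3 \<circ> (cyc3 3 2 4 \<circ> cyc3 3 5 1))) x \<noteq> x) [1,2,3,4,5]) = 3"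
    and c2: "length (filter (\<lambda>x. (cyc3 q r s \<circ> (cyc3 1 4 3 \<circ> cyc3 2 3 4)) x \<noteq> x) [1,2,3,4,5]) = 3"
  show "cyc3 q r s \<circ> cyc3 1 4 3 = cyc3 1 3 2 \<circ> cyc3 1 3 4 \<or> cyc3 q r s \<circ> cyc3 1 4 3 = id \<or>
        length (filter (\<lambda>x. (cyc3 q r s \<circ> cyc3 1 4 3) x \<noteq> x) [1,2,3,4,5]) = 3"
    using q r s qrs c1 c2
    apply (simp only: set_simps insert_iff empty_iff)
    apply (elim disjE)
    apply (simp_all add: cyc3_def)
    apply (auto simp: fun_eq_iff cyc3_def)
    done
qed

lemma perm_vals:
  assumes "\<forall>l < length P. s (Suc l) = P ! l"
  shows "\<And>l. l < length P \<Longrightarrow> s (Suc l) = P ! l"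
  using assms by blast

lemma card_range_le: "distinct P \<Longrightarrow> set P \<subseteq> {1..n} \<Longrightarrow> length P \<le> n"
  using card_mono[OF finite_atLeastAtMost, of "set P" 1 n] distinct_card by fastforce

lemma T1g:
  assumes h: "aut n h" "fixN n h" and d: "distinct [i,j,k,a,b,c]" and r: "set [i,j,k,a,b,c] \<subseteq> {1..n}"
  shows "h (cyc3 i j k \<circ> cyc3 a b c) = cyc3 i j k \<circ> cyc3 a b c"
proof -
  obtain s where s: "s permutes {1..n}" and sv: "\<forall>l < length [i,j,k,a,b,c]. s (Suc l) = [i,j,k,a,b,c] ! l"
    using exists_perm[OF d r] by blast
  have n: "n \<ge> 6" using card_range_le[OF d r] by simp
  have v: "s 1 = i" "s 2 = j" "s 3 = k" "s 4 = a" "s 5 = b" "s 6 = c"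
    using sv[rule_format, of 0] sv[rule_format, of 1] sv[rule_format, of 2] sv[rule_format, of 3]
      sv[rule_format, of 4] sv[rule_format, of 5] by (simp_all add: numeral_eq_Suc)
  have ha: "aut n (hcj s h)" "fixN n (hcj s h)" using hcj_aut[OF s h] by blast+
  have "hcj s h (cyc3 1 2 3 \<circ> cyc3 4 5 6) = cyc3 1 2 3 \<circ> cyc3 4 5 6" using T1c[OF ha n] .
  from hcj_transfer[OF s this] show ?thesis using v by (simp add: cj_comp[OF s] cj_cyc3[OF s] v del: One_nat_def)
qed

lemma T2g:
  assumes h: "aut n h" "fixN n h" and d: "distinct [j,k,x,b,c]" and r: "set [j,k,x,b,c] \<subseteq> {1..n}"
  shows "h (cyc3 x j k \<circ> cyc3 x b c) = cyc3 x j k \<circ> cyc3 x b c"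
proof -
  obtain s where s: "s permutes {1..n}" and sv: "\<forall>l < length [j,k,x,b,c]. s (Suc l) = [j,k,x,b,c] ! l"
    using exists_perm[OF d r] by blast
  have n: "n \<ge> 5" using card_range_le[OF d r] by simp
  have v: "s 1 = j" "s 2 = k" "s 3 = x" "s 4 = b" "s 5 = c"
    using sv[rule_format, of 0] sv[rule_format, of 1] sv[rule_format, of 2] sv[rule_format, of 3]
      sv[rule_format, of 4] by (simp_all add: numeral_eq_Suc)
  have ha: "aut n (hcj s h)" "fixN n (hcj s h)" using hcj_aut[OF s h] by blast+
  have "hcj s h (cyc3 3 1 2 \<circ> cyc3 3 4 5) = cyc3 3 1 2 \<circ> cyc3 3 4 5" using T2c[OF ha n] .
  from hcj_transfer[OF s this] show ?thesis using v by (simp add: cj_comp[OF s] cj_cyc3[OF s] v del: One_nat_def)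
qed

lemma T3g:
  assumes h: "aut n h" "fixN n h" and n: "n \<ge> 5" and d: "distinct [x,k,y,c]" and r: "set [x,k,y,c] \<subseteq> {1..n}"
  shows "h (cyc3 x y k \<circ> cyc3 x y c) = cyc3 x y k \<circ> cyc3 x y c"
proof -
  have "card ({1..n} - set [x,k,y,c]) \<ge> 1"
  proof -
    have "card ({1..n} - set [x,k,y,c]) = card {1..n} - card (set [x,k,y,c])"
      using r by (simp add: card_Diff_subset)
    also have "\<dots> = n - 4" using distinct_card[OF d] by simp
    finally show ?thesis using n by simp
  qed
  then obtain e where e: "e \<in> {1..n}" "e \<notin> set [x,k,y,c]"
    by (metis Diff_iff card.empty all_not_in_conv not_one_le_zero)
  have d2: "distinct [x,k,y,c,e]" using d e by auto
  have r2: "set [x,k,y,c,e] \<subseteq> {1..n}" using r e by simp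
  obtain s where s: "s permutes {1..n}" and sv: "\<forall>l < length [x,k,y,c,e]. s (Suc l) = [x,k,y,c,e] ! l"
    using exists_perm[OF d2 r2] by blast
  have v: "s 1 = x" "s 2 = k" "s 3 = y" "s 4 = c" "s 5 = e"
    using sv[rule_format, of 0] sv[rule_format, of 1] sv[rule_format, of 2] sv[rule_format, of 3]
      sv[rule_format, of 4] by (simp_all add: numeral_eq_Suc)
  have ha: "aut n (hcj s h)" "fixN n (hcj s h)" using hcj_aut[OF s h] by blast+
  have "hcj s h (cyc3 3 1 5 \<circ> cyc3 3 4 2) = cyc3 3 1 5 \<circ> cyc3 3 4 2"
    using T2g[OF ha, of 1 5 3 4 2] n by simp
  then have "hcj s h (cyc3 1 3 2 \<circ> cyc3 1 3 4) = cyc3 1 3 2 \<circ> cyc3 1 3 4" using T3c[OF ha n] by blast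
  from hcj_transfer[OF s this] show ?thesis using v by (simp add: cj_comp[OF s] cj_cyc3[OF s] v del: One_nat_def)
qed

lemma D1x:
  assumes h: "aut n h" "fixN n h" and n: "n \<ge> 5"
    and r: "a \<in> {1..n}" "j \<in> {1..n}" "l \<in> {1..n}" "b \<in> {1..n}" "c \<in> {1..n}"
    and d: "a \<noteq> j" "j \<noteq> l" "a \<noteq> l" "a \<noteq> b" "b \<noteq> c" "a \<noteq> c"
  shows "h (cyc3 a j l \<circ> cyc3 a b c) = cyc3 a j l \<circ> cyc3 a b c"
proof -
  consider "j \<notin> {b,c}" "l \<notin> {b,c}" | "j = b" "l = c" | "j = b" "l \<notin> {b,c}" | "j = c" "l = b"
    | "j = c" "l \<notin> {b,c}" | "j \<notin> {b,c}" "l = b" | "j \<notin> {b,c}" "l = c"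
    using d by blast
  then show ?thesis
  proof cases
    case 1
    then show ?thesis using T2g[OF h, of j l a b c] r d by auto
  next
    case 2
    have "cyc3 a j l \<circ> cyc3 a b c = cyc3 a c b" using 2 d by (auto simp: fun_eq_iff cyc3_def)
    then show ?thesis using fix_cyc3[OF h(2), of a c b] r d by simp
  next
    case 3
    then show ?thesis using T3g[OF h n, of a l b c] r d by auto
  next
    case 4
    have "cyc3 a j l \<circ> cyc3 a b c = id" using 4 d by (auto simp: fun_eq_iff cyc3_def)
    then show ?thesis using h(2) unfolding fixN_def by simp
  next
    case 5
    have "cyc3 a j l \<circ> cyc3 a b c = cyc3 a b l" using 5 d by (auto simp: fun_eq_iff cyc3_def)
    then show ?thesis using fix_cyc3[OF h(2), of a b l] r d 5 by auto
  next
    case 6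
    have "cyc3 a j l \<circ> cyc3 a b c = cyc3 b c j" using 6 d by (auto simp: fun_eq_iff cyc3_def)
    then show ?thesis using fix_cyc3[OF h(2), of b c j] r d 6 by auto
  next
    case 7
    have e: "cyc3 a j l \<circ> cyc3 a b c = cyc3 c a j \<circ> cyc3 c a b"
      using 7 d by (auto simp: fun_eq_iff cyc3_def)
    show ?thesis unfolding e using T3g[OF h n, of c j a b] r d 7 by auto
  qed
qed

lemma D1y:
  assumes h: "aut n h" "fixN n h" and n: "n \<ge> 5"
    and r: "i \<in> {1..n}" "j \<in> {1..n}" "l \<in> {1..n}" "a \<in> {1..n}" "b \<in> {1..n}" "c \<in> {1..n}"
    and d: "i \<noteq> j" "j \<noteq> l" "i \<noteq> l" "a \<noteq> b" "b \<noteq> c" "a \<noteq> c"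
    and i: "i \<in> {a,b,c}"
  shows "h (cyc3 i j l \<circ> cyc3 a b c) = cyc3 i j l \<circ> cyc3 a b c"
proof -
  consider "i = a" | "i = b" | "i = c" using i by blast
  then show ?thesis
  proof cases
    case 1 then show ?thesis using D1x[OF h n, of a j l b c] r d by simp
  next
    case 2
    have "cyc3 a b c = cyc3 b c a" using cyc3_rot d by blast
    then show ?thesis using D1x[OF h n, of b j l c a] r d 2 by simp
  next
    case 3
    have "cyc3 a b c = cyc3 c a b" using cyc3_rot d by metis
    then show ?thesis using D1x[OF h n, of c j l a b] r d 3 by simp
  qed
qed

lemma D1i:
  assumes h: "aut n h" "fixN n h" and n: "n \<ge> 5"
    and r: "i \<in> {1..n}" "j \<in> {1..n}" "l \<in> {1..n}" "a \<in> {1..n}" "b \<in> {1..n}" "c \<in> {1..n}"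
    and d: "i \<noteq> j" "j \<noteq> l" "i \<noteq> l" "a \<noteq> b" "b \<noteq> c" "a \<noteq> c"
  shows "h (cyc3 i j l \<circ> cyc3 a b c) = cyc3 i j l \<circ> cyc3 a b c"
proof -
  consider "i \<in> {a,b,c}" | "j \<in> {a,b,c}" | "l \<in> {a,b,c}" | "i \<notin> {a,b,c}" "j \<notin> {a,b,c}" "l \<notin> {a,b,c}"
    by blast
  then show ?thesis
  proof cases
    case 1 then show ?thesis using D1y[OF h n r d] by blast
  next
    case 2
    have "cyc3 i j l = cyc3 j l i" using cyc3_rot d by blast
    then show ?thesis using D1y[OF h n, of j l i a b c] r d 2 by simp
  next
    case 3
    have "cyc3 i j l = cyc3 l i j" using cyc3_rot d by metis
    then show ?thesis using D1y[OF h n, of l i j a b c] r d 3 by simp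
  next
    case 4
    then show ?thesis using T1g[OF h, of i j l a b c] r d by auto
  qed
qed

lemma D1:
  assumes h: "aut n h" "fixN n h" and n: "n \<ge> 5"
    and t: "t \<in> three_cycles n" and s: "s \<in> three_cycles n"
  shows "h (t \<circ> s) = t \<circ> s"
  using t s D1i[OF h n] unfolding three_cycles_def by blast

inductive_set gen :: "nat \<Rightarrow> (nat \<Rightarrow> nat) set" for n where
  gen_id: "id \<in> gen n"
| gen_step: "t \<in> three_cycles n \<Longrightarrow> x \<in> gen n \<Longrightarrow> t \<circ> x \<in> gen n"

lemma cyc3_three: "i \<in> {1..n} \<Longrightarrow> j \<in> {1..n} \<Longrightarrow> k \<in> {1..n} \<Longrightarrow> i \<noteq> j \<Longrightarrow> j \<noteq> k \<Longrightarrow> i \<noteq> k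
  \<Longrightarrow> cyc3 i j k \<in> three_cycles n"
  unfolding three_cycles_def by blast

lemma TT1:
  assumes r: "u \<in> {1..n}" "v \<in> {1..n}" "c \<in> {1..n}" and d: "u \<noteq> v" "v \<noteq> c" "u \<noteq> c" and x: "x \<in> gen n"
  shows "transpose u v \<circ> transpose v c \<circ> x \<in> gen n"
proof -
  have "transpose u v \<circ> transpose v c = cyc3 u v c" using cyc3_transp[OF d] by simp
  then show ?thesis using gen_step[OF cyc3_three[OF r d] x] by simp
qed

lemma TT:
  assumes r: "u \<in> {1..n}" "v \<in> {1..n}" "a \<in> {1..n}" "b \<in> {1..n}" and d: "u \<noteq> v" "a \<noteq> b" and x: "x \<in> gen n"
  shows "transpose u v \<circ> transpose a b \<circ> x \<in> gen n"
proof -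
  have tc: "\<And>p q. transpose p q = transpose q p" by (rule transpose_commute)
  consider "{u,v} = {a,b}" | "v = a" "u \<noteq> b" | "v = b" "u \<noteq> a" | "u = a" "v \<noteq> b" | "u = b" "v \<noteq> a"
    | "u \<notin> {a,b}" "v \<notin> {a,b}" by blast
  then show ?thesis
  proof cases
    case 1
    then have "transpose u v \<circ> transpose a b = id" using d by (auto simp: fun_eq_iff transpose_def doubleton_eq_iff)
    then show ?thesis using x by (metis id_comp)
  next
    case 2 then show ?thesis using TT1[OF r(1,2,4)] d x by auto
  next
    case 3 then show ?thesis using TT1[OF r(1,2,3)] d x tc[of a b] by auto
  next
    case 4 then show ?thesis using TT1[OF r(2,1,4)] d x tc[of u v] by auto
  next
    case 5 then show ?thesis using TT1[OF r(2,1,3)] d x tc[of u v] tc[of a b] by auto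
  next
    case 6
    have e: "transpose u v \<circ> transpose a b \<circ> x = cyc3 u v a \<circ> (cyc3 v a b \<circ> x)"
      using 6 d by (auto simp: fun_eq_iff transpose_def cyc3_def)
    have "cyc3 v a b \<circ> x \<in> gen n" using gen_step[OF cyc3_three[OF r(2,3,4)] x] 6 d by auto
    then show ?thesis unfolding e using gen_step[OF cyc3_three[OF r(1,2,3)]] 6 d by auto
  qed
qed

lemma AG_gen:
  assumes n: "n \<ge> 2" and p: "p \<in> AG n"
  shows "p \<in> gen n"
proof -
  have r12: "(1::nat) \<in> {1..n}" "(2::nat) \<in> {1..n}" using n by auto
  have pp: "p permutes {1..n}" using p AG_perm by blast
  have "(evenperm p \<longrightarrow> p \<in> gen n) \<and> (\<not> evenperm p \<longrightarrow> transpose 1 2 \<circ> p \<in> gen n)"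
    using pp finite_atLeastAtMost
  proof (induction p rule: permutes_induct)
    case id
    show ?case using gen_id[of n] by (simp del: id_apply)
  next
    case (swap a b p)
    have pm: "permutation p" using swap.hyps(4) permutation_permutes by blast
    have ev: "evenperm (transpose a b \<circ> p) = (\<not> evenperm p)"
      using evenperm_comp[OF permutation_swap_id pm, of a b] evenperm_swap[of a b] swap.hyps(3) by simp
    show ?case
    proof (cases "evenperm p")
      case True
      then have "p \<in> gen n" using swap.IH by blast
      then have "transpose 1 2 \<circ> transpose a b \<circ> p \<in> gen n" using TT[OF r12 swap.hyps(1,2)] swap.hyps(3) by simp
      then have "transpose 1 2 \<circ> (transpose a b \<circ> p) \<in> gen n" by (simp only: o_assoc)
      then show ?thesis using ev True by blast
    next
      case False
      then have g: "transpose 1 2 \<circ> p \<in> gen n" using swap.IH by blast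
      have "transpose a b \<circ> p = transpose a b \<circ> transpose 1 2 \<circ> (transpose 1 2 \<circ> p)"
        by (simp add: fun_eq_iff)
      then have "transpose a b \<circ> p \<in> gen n" using TT[OF swap.hyps(1,2) r12 swap.hyps(3) _ g] by simp
      then show ?thesis using ev False by blast
    qed
  qed
  then show ?thesis using p unfolding alt_grp_def by blast
qed

lemma E_right: "x \<in> AG n \<Longrightarrow> E u v \<longleftrightarrow> E (u \<circ> x) (v \<circ> x)"
proof
  assume x: "x \<in> AG n"
  assume "E u v" then obtain t where "is3 t" "v = t \<circ> u" unfolding E_def by blast
  then show "E (u \<circ> x) (v \<circ> x)" unfolding E_def by (auto simp: o_assoc)
next
  assume x: "x \<in> AG n"
  assume "E (u \<circ> x) (v \<circ> x)" then obtain t where t: "is3 t" "v \<circ> x = t \<circ> (u \<circ> x)" unfolding E_def by blast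
  then have "v \<circ> x \<circ> inv x = t \<circ> u \<circ> x \<circ> inv x" by (simp add: o_assoc)
  then have "v = t \<circ> u" using AG_inv_o[OF x] by (simp add: o_assoc[symmetric])
  then show "E u v" using t unfolding E_def by blast
qed

definition hr where "hr x h = (\<lambda>y. h (y \<circ> x) \<circ> inv x)"

lemma hr_aut:
  assumes h: "aut n h" and x: "x \<in> AG n" and hx: "h x = x" and ht: "\<forall>t\<in>three_cycles n. h (t \<circ> x) = t \<circ> x"
  shows "aut n (hr x h) \<and> fixN n (hr x h)"
proof -
  have hA: "\<forall>y\<in>AG n. h y \<in> AG n" and inj: "inj_on h (AG n)"
    and he: "\<forall>u\<in>AG n. \<forall>v\<in>AG n. E u v \<longleftrightarrow> E (h u) (h v)" using h unfolding aut_def by blast+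
  have xi: "inv x \<in> AG n" using AG_inv[OF x] .
  have io: "x \<circ> inv x = id" "inv x \<circ> x = id" using AG_inv_o[OF x] by auto
  have m: "\<forall>y\<in>AG n. hr x h y \<in> AG n" unfolding hr_def using hA AG_comp x xi by blast
  have i: "inj_on (hr x h) (AG n)"
  proof (rule inj_onI)
    fix u v assume uv: "u \<in> AG n" "v \<in> AG n" "hr x h u = hr x h v"
    then have "h (u \<circ> x) \<circ> inv x \<circ> x = h (v \<circ> x) \<circ> inv x \<circ> x" unfolding hr_def by simp
    then have "h (u \<circ> x) = h (v \<circ> x)" using io by (simp add: o_assoc[symmetric])
    then have "u \<circ> x = v \<circ> x" using inj AG_comp[OF uv(1) x] AG_comp[OF uv(2) x] unfolding inj_on_def by blast
    then have "u \<circ> x \<circ> inv x = v \<circ> x \<circ> inv x" by simp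
    then show "u = v" using io by (simp add: o_assoc[symmetric])
  qed
  have e: "\<forall>u\<in>AG n. \<forall>v\<in>AG n. E u v \<longleftrightarrow> E (hr x h u) (hr x h v)"
  proof (intro ballI)
    fix u v assume uv: "u \<in> AG n" "v \<in> AG n"
    have "E u v \<longleftrightarrow> E (u \<circ> x) (v \<circ> x)" using E_right[OF x] .
    also have "\<dots> \<longleftrightarrow> E (h (u \<circ> x)) (h (v \<circ> x))" using he AG_comp[OF uv(1) x] AG_comp[OF uv(2) x] by blast
    also have "\<dots> \<longleftrightarrow> E (hr x h u) (hr x h v)" unfolding hr_def using E_right[OF xi] by blast
    finally show "E u v \<longleftrightarrow> E (hr x h u) (hr x h v)" .
  qed
  have f1: "hr x h id = id" unfolding hr_def using hx io by simp
  have f2: "\<forall>t\<in>three_cycles n. hr x h t = t"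
  proof
    fix t assume "t \<in> three_cycles n"
    then have "hr x h t = t \<circ> x \<circ> inv x" unfolding hr_def using ht by simp
    then show "hr x h t = t" using io by (simp add: o_assoc[symmetric])
  qed
  show ?thesis using m i e f1 f2 unfolding aut_def fixN_def by blast
qed

theorem Dfix:
  assumes h: "aut n h" "fixN n h" and n: "n \<ge> 5"
  shows "\<forall>x\<in>AG n. h x = x"
proof -
  have "\<And>x. x \<in> gen n \<Longrightarrow> x \<in> AG n \<and> h x = x \<and> (\<forall>t\<in>three_cycles n. h (t \<circ> x) = t \<circ> x)"
  proof -
    fix x assume "x \<in> gen n"
    then show "x \<in> AG n \<and> h x = x \<and> (\<forall>t\<in>three_cycles n. h (t \<circ> x) = t \<circ> x)"
    proof (induction x rule: gen.induct)
      case gen_id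
      have "\<forall>t\<in>three_cycles n. h (t \<circ> id) = t \<circ> id" using h(2) unfolding fixN_def by simp
      then show ?case using h(2) AG_id unfolding fixN_def by blast
    next
      case (gen_step s x)
      have x: "x \<in> AG n" "h x = x" "\<forall>t\<in>three_cycles n. h (t \<circ> x) = t \<circ> x" using gen_step.IH by blast+
      have sA: "s \<in> AG n" using three_AG[OF gen_step.hyps(1)] by blast
      have ha: "aut n (hr x h)" "fixN n (hr x h)" using hr_aut[OF h(1) x] by blast+
      have io: "inv x \<circ> x = id" using AG_inv_o[OF x(1)] by blast
      have "\<forall>t\<in>three_cycles n. h (t \<circ> (s \<circ> x)) = t \<circ> (s \<circ> x)"
      proof
        fix t assume t: "t \<in> three_cycles n"
        have "hr x h (t \<circ> s) = t \<circ> s" using D1[OF ha n t gen_step.hyps(1)] .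
        then have "h (t \<circ> s \<circ> x) \<circ> inv x \<circ> x = t \<circ> s \<circ> x" unfolding hr_def by simp
        then show "h (t \<circ> (s \<circ> x)) = t \<circ> (s \<circ> x)" using io by (simp add: o_assoc[symmetric])
      qed
      then show ?case using x(3) gen_step.hyps(1) AG_comp[OF sA x(1)] by blast
    qed
  qed
  then show ?thesis using AG_gen n by auto
qed

lemma delta_set:
  assumes r: "a \<in> {1..n}" "b \<in> {1..n}" "c \<in> {1..n}" and d: "a \<noteq> b" "b \<noteq> c" "a \<noteq> c"
  shows "{cyc3 a b c, cyc3 a c b} \<in> Delta n"
proof -
  have R: "\<And>x y z. x \<noteq> y \<Longrightarrow> y \<noteq> z \<Longrightarrow> x \<noteq> z \<Longrightarrow> cyc3 x y z = cyc3 y z x" by (rule cyc3_rot)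
  have mem: "\<And>i j k. 1 \<le> i \<Longrightarrow> i < j \<Longrightarrow> j < k \<Longrightarrow> k \<le> n \<Longrightarrow> {cyc3 i j k, cyc3 i k j} \<in> Delta n"
    unfolding Delta_def Delta_ijk_def by blast
  have E1: "cyc3 b c a = cyc3 a b c" "cyc3 b a c = cyc3 a c b" "cyc3 c a b = cyc3 a b c" "cyc3 c b a = cyc3 a c b"
    using d by (auto simp: fun_eq_iff cyc3_def)
  consider "a < b" "b < c" | "a < c" "c < b" | "b < a" "a < c" | "b < c" "c < a" | "c < a" "a < b" | "c < b" "b < a"
    using d by arith
  then show ?thesis
  proof cases
    case 1 then show ?thesis using mem[of a b c] r by auto
  next
    case 2 then show ?thesis using mem[of a c b] r by (auto simp: insert_commute)
  next
    case 3 then show ?thesis using mem[of b a c] r by (simp add: E1 insert_commute)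
  next
    case 4 then show ?thesis using mem[of b c a] r by (simp add: E1 insert_commute)
  next
    case 5 then show ?thesis using mem[of c a b] r by (simp add: E1 insert_commute)
  next
    case 6 then show ?thesis using mem[of c b a] r by (simp add: E1 insert_commute)
  qed
qed

lemma noE1: "a \<noteq> b \<Longrightarrow> a \<noteq> c \<Longrightarrow> a \<noteq> d \<Longrightarrow> b \<noteq> c \<Longrightarrow> b \<noteq> d \<Longrightarrow> c \<noteq> d \<Longrightarrow> \<not> E (cyc3 a b c) (cyc3 a d b)"
proof
  assume d: "a \<noteq> b" "a \<noteq> c" "a \<noteq> d" "b \<noteq> c" "b \<noteq> d" "c \<noteq> d" and "E (cyc3 a b c) (cyc3 a d b)"
  then obtain u where u: "is3 u" "cyc3 a d b = u \<circ> cyc3 a b c" unfolding E_def by blast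
  have "u a = c" using fun_cong[OF u(2), of c] d by (simp add: cyc3_def)
  moreover have "u c = a" using fun_cong[OF u(2), of b] d by (simp add: cyc3_def)
  ultimately show False using is3_no2[OF u(1)] d by blast
qed

lemma noE2: "a \<noteq> b \<Longrightarrow> a \<noteq> c \<Longrightarrow> a \<noteq> d \<Longrightarrow> b \<noteq> c \<Longrightarrow> b \<noteq> d \<Longrightarrow> c \<noteq> d \<Longrightarrow> \<not> E (cyc3 a c b) (cyc3 a b d)"
proof
  assume d: "a \<noteq> b" "a \<noteq> c" "a \<noteq> d" "b \<noteq> c" "b \<noteq> d" "c \<noteq> d" and "E (cyc3 a c b) (cyc3 a b d)"
  then obtain u where u: "is3 u" "cyc3 a b d = u \<circ> cyc3 a c b" unfolding E_def by blast
  have "u a = d" using fun_cong[OF u(2), of b] d by (simp add: cyc3_def)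
  moreover have "u d = a" using fun_cong[OF u(2), of d] d by (simp add: cyc3_def)
  ultimately show False using is3_no2[OF u(1)] d by blast
qed

lemma yesE: "a \<noteq> b \<Longrightarrow> a \<noteq> c \<Longrightarrow> a \<noteq> d \<Longrightarrow> b \<noteq> c \<Longrightarrow> b \<noteq> d \<Longrightarrow> c \<noteq> d \<Longrightarrow> E (cyc3 a b c) (cyc3 a b d)"
  unfolding E_def
  apply (rule exI[of _ "cyc3 a c d"])
  apply (rule conjI)
   apply (simp add: is3_cyc3)
  apply (auto simp: fun_eq_iff cyc3_def)
  done

lemma inv_cyc3: "a \<noteq> b \<Longrightarrow> b \<noteq> c \<Longrightarrow> a \<noteq> c \<Longrightarrow> inv (cyc3 a b c) = cyc3 a c b"
  by (rule inv_unique_comp) (auto simp: fun_eq_iff cyc3_def)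

lemma kernel_basic:
  assumes g: "g \<in> delta_kernel n"
  shows "aut n g" "g id = id" "g \<in> extensional (AG n)"
    "\<And>a b c. a \<in> {1..n} \<Longrightarrow> b \<in> {1..n} \<Longrightarrow> c \<in> {1..n} \<Longrightarrow> a \<noteq> b \<Longrightarrow> b \<noteq> c \<Longrightarrow> a \<noteq> c
      \<Longrightarrow> g (cyc3 a b c) = cyc3 a b c \<or> g (cyc3 a b c) = cyc3 a c b"
proof -
  have ga: "g \<in> cag_aut n" and gi: "g id = id" and gd: "\<forall>D\<in>Delta n. g ` D = D"
    using g unfolding delta_kernel_def stab_e_def by auto
  show "aut n g" using cag_aut_aut[OF ga] .
  show "g id = id" using gi .
  have "g \<in> AG n \<rightarrow>\<^sub>E AG n" using ga unfolding cag_aut_def by blast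
  then show "g \<in> extensional (AG n)" by (simp add: PiE_def)
  fix a b c assume r: "a \<in> {1..n}" "b \<in> {1..n}" "c \<in> {1..n}" and d: "a \<noteq> b" "b \<noteq> c" "a \<noteq> c"
  have im: "g ` {cyc3 a b c, cyc3 a c b} = {cyc3 a b c, cyc3 a c b}" by (rule bspec[OF gd delta_set[OF r d]])
  have "g (cyc3 a b c) \<in> g ` {cyc3 a b c, cyc3 a c b}" by simp
  then show "g (cyc3 a b c) = cyc3 a b c \<or> g (cyc3 a b c) = cyc3 a c b" unfolding im by simp
qed

lemma cyc3_ne: "a \<noteq> b \<Longrightarrow> b \<noteq> c \<Longrightarrow> a \<noteq> c \<Longrightarrow> cyc3 a b c \<noteq> cyc3 a c b"
proof
  assume d: "a \<noteq> b" "b \<noteq> c" "a \<noteq> c" and eq: "cyc3 a b c = cyc3 a c b"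
  have "cyc3 a b c b = cyc3 a c b b" using eq by simp
  then show False using d by (simp add: cyc3_def)
qed

lemma kernel_uniform:
  assumes g: "g \<in> delta_kernel n" and n: "n \<ge> 5"
  shows "(\<forall>a\<in>{1..n}. \<forall>b\<in>{1..n}. \<forall>c\<in>{1..n}. a \<noteq> b \<longrightarrow> b \<noteq> c \<longrightarrow> a \<noteq> c \<longrightarrow> g (cyc3 a b c) = cyc3 a b c)
       \<or> (\<forall>a\<in>{1..n}. \<forall>b\<in>{1..n}. \<forall>c\<in>{1..n}. a \<noteq> b \<longrightarrow> b \<noteq> c \<longrightarrow> a \<noteq> c \<longrightarrow> g (cyc3 a b c) = cyc3 a c b)"
proof -
  note kb = kernel_basic[OF g]
  have inj: "inj_on g (AG n)" using kb(1) unfolding aut_def by blast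
  define F where "F a b c \<longleftrightarrow> g (cyc3 a b c) = cyc3 a b c" for a b c
  let ?R = "\<lambda>a b c. a \<in> {1..n} \<and> b \<in> {1..n} \<and> c \<in> {1..n} \<and> a \<noteq> b \<and> b \<noteq> c \<and> a \<noteq> c"
  have alt: "\<And>a b c. ?R a b c \<Longrightarrow> \<not> F a b c \<Longrightarrow> g (cyc3 a b c) = cyc3 a c b"
    using kb(4) unfolding F_def by blast
  have rot: "\<And>a b c. ?R a b c \<Longrightarrow> F a b c \<longleftrightarrow> F b c a"
  proof -
    fix a b c assume R: "?R a b c"
    then have "cyc3 a b c = cyc3 b c a" using cyc3_rot by blast
    then show "F a b c \<longleftrightarrow> F b c a" unfolding F_def by simp
  qed
  have sw: "\<And>a b c. ?R a b c \<Longrightarrow> F a b c \<longleftrightarrow> F a c b"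
  proof -
    fix a b c assume R: "?R a b c"
    have A: "cyc3 a b c \<in> AG n" "cyc3 a c b \<in> AG n" using R cyc3_AG by auto
    have ne: "cyc3 a b c \<noteq> cyc3 a c b" using R cyc3_ne by auto
    have g1: "g (cyc3 a b c) = cyc3 a b c \<or> g (cyc3 a b c) = cyc3 a c b" using kb(4) R by blast
    have g2: "g (cyc3 a c b) = cyc3 a c b \<or> g (cyc3 a c b) = cyc3 a b c" using kb(4)[of a c b] R by blast
    have "g (cyc3 a b c) \<noteq> g (cyc3 a c b)" using inj A ne unfolding inj_on_def by blast
    then show "F a b c \<longleftrightarrow> F a c b" unfolding F_def using g1 g2 by auto
  qed
  have step: "\<And>a b c d. ?R a b c \<Longrightarrow> d \<in> {1..n} \<Longrightarrow> d \<noteq> a \<Longrightarrow> d \<noteq> b \<Longrightarrow> F a b c \<longleftrightarrow> F a b d"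
  proof -
    fix a b c d assume R: "?R a b c" and dd: "d \<in> {1..n}" "d \<noteq> a" "d \<noteq> b"
    show "F a b c \<longleftrightarrow> F a b d"
    proof (cases "d = c")
      case True then show ?thesis by simp
    next
      case False
      have A: "cyc3 a b c \<in> AG n" "cyc3 a b d \<in> AG n" using R dd cyc3_AG by auto
      have e: "E (cyc3 a b c) (cyc3 a b d)" using yesE R dd False by auto
      then have e2: "E (g (cyc3 a b c)) (g (cyc3 a b d))" using aut_E[OF kb(1) A e] by blast
      have Rd: "?R a b d" using R dd by auto
      show ?thesis
      proof (rule ccontr)
        assume "\<not> (F a b c \<longleftrightarrow> F a b d)"
        then consider "F a b c" "\<not> F a b d" | "\<not> F a b c" "F a b d" by blast
        then show False
        proof cases
          case 1
          then have "E (cyc3 a b c) (cyc3 a d b)" using e2 alt[OF Rd] unfolding F_def by simp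
          then show False using noE1[of a b c d] R dd False by auto
        next
          case 2
          then have "E (cyc3 a c b) (cyc3 a b d)" using e2 alt[OF R] unfolding F_def by simp
          then show False using noE2[of a b c d] R dd False by auto
        qed
      qed
    qed
  qed
  have avoid: "\<And>u v. \<exists>x\<in>{1,2,3::nat}. x \<noteq> u \<and> x \<noteq> v"
  proof -
    fix u v :: nat
    show "\<exists>x\<in>{1,2,3::nat}. x \<noteq> u \<and> x \<noteq> v"
    proof (cases "1 \<noteq> u \<and> 1 \<noteq> v")
      case True then show ?thesis by blast
    next
      case F1: False
      show ?thesis
      proof (cases "2 \<noteq> u \<and> 2 \<noteq> v")
        case True then show ?thesis by blast
      next
        case False then have "3 \<noteq> u \<and> 3 \<noteq> v" using F1 by auto
        then show ?thesis by blast
      qed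
    qed
  qed
  have r3: "{1,2,3::nat} \<subseteq> {1..n}" using n by auto
  have chain: "\<And>a b c. ?R a b c \<Longrightarrow> F a b c \<longleftrightarrow> F 1 2 3"
  proof -
    fix a b c assume R: "?R a b c"
    obtain x where x: "x \<in> {1,2,3}" "x \<noteq> a" "x \<noteq> b" using avoid by blast
    have xr: "x \<in> {1..n}" using x r3 by blast
    have s1: "F a b c \<longleftrightarrow> F x a b" using step[OF R xr x(2,3)] rot[of a b x] rot[of b x a] R x xr by auto
    have R1: "?R x a b" using R x xr by auto
    obtain y where y: "y \<in> {1,2,3}" "y \<noteq> x" "y \<noteq> a" using avoid by blast
    have yr: "y \<in> {1..n}" using y r3 by blast
    have s2: "F x a b \<longleftrightarrow> F y x a" using step[OF R1 yr y(2,3)] rot[of x a y] rot[of a y x] R1 y yr by auto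
    have R2: "?R y x a" using R1 y yr by auto
    obtain z where z: "z \<in> {1,2,3}" "z \<noteq> y" "z \<noteq> x" using avoid by blast
    have zr: "z \<in> {1..n}" using z r3 by blast
    have s3: "F y x a \<longleftrightarrow> F y x z" using step[OF R2 zr z(2,3)] by blast
    have R3: "?R y x z" using R2 z zr by auto
    have base: "F 1 2 3 \<longleftrightarrow> F 2 3 1" "F 1 2 3 \<longleftrightarrow> F 3 1 2" "F 1 2 3 \<longleftrightarrow> F 1 3 2"
      "F 1 3 2 \<longleftrightarrow> F 3 2 1" "F 1 3 2 \<longleftrightarrow> F 2 1 3"
      using rot[of 1 2 3] rot[of 2 3 1] sw[of 1 2 3] rot[of 1 3 2] rot[of 3 2 1] r3 by auto
    have base2: "F 2 3 1 \<longleftrightarrow> F 1 2 3" "F 3 1 2 \<longleftrightarrow> F 1 2 3" "F 1 3 2 \<longleftrightarrow> F 1 2 3"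
      "F 3 2 1 \<longleftrightarrow> F 1 2 3" "F 2 1 3 \<longleftrightarrow> F 1 2 3" using base by blast+
    have "F y x z \<longleftrightarrow> F 1 2 3" using x(1) y(1) z(1) R3
      apply (simp only: insert_iff empty_iff)
      apply (elim disjE)
      apply (simp_all add: base2[simplified])
      done
    then show "F a b c \<longleftrightarrow> F 1 2 3" using s1 s2 s3 by blast
  qed
  show ?thesis
  proof (cases "F 1 2 3")
    case True then show ?thesis using chain unfolding F_def by blast
  next
    case False then show ?thesis using chain alt by blast
  qed
qed

lemma AG_inv_inv: "x \<in> AG n \<Longrightarrow> inv (inv x) = x"
  using AG_perm permutes_inv_inv by blast

lemma inv_E:
  assumes x: "x \<in> AG n" and y: "y \<in> AG n" and e: "E x y"
  shows "E (inv x) (inv y)"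
proof -
  obtain t where t: "is3 t" "y = t \<circ> x" using e unfolding E_def by blast
  obtain a b c where d: "a \<noteq> b" "b \<noteq> c" "a \<noteq> c" and tt: "t = cyc3 a b c" using t(1) unfolding is3_def by blast
  have it: "inv t = cyc3 a c b" using inv_cyc3[OF d] tt by simp
  have i3: "is3 (inv t)" using it d is3_cyc3 by auto
  have xp: "inv x permutes {1..n}" using permutes_inv[OF AG_perm[OF x]] .
  have "inv y = inv x \<circ> inv t" using t(2) o_inv_distrib[OF is3_bij[OF t(1)] AG_bij[OF x]] by simp
  also have "\<dots> = (inv x \<circ> inv t \<circ> x) \<circ> inv x" using AG_inv_o[OF x] by (simp add: o_assoc[symmetric])
  also have "inv x \<circ> inv t \<circ> x = cj (inv x) (inv t)" unfolding cj_def using AG_inv_inv[OF x] by simp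
  finally have "inv y = cj (inv x) (inv t) \<circ> inv x" .
  then show ?thesis using cj_is3[OF xp i3] unfolding E_def by blast
qed

lemma kernel_sub:
  assumes n: "n \<ge> 5"
  shows "delta_kernel n \<subseteq> {restrict id (AG n), restrict inv (AG n)}"
proof
  fix g assume g: "g \<in> delta_kernel n"
  note kb = kernel_basic[OF g]
  have gA: "\<forall>x\<in>AG n. g x \<in> AG n" and inj: "inj_on g (AG n)"
    and ge: "\<forall>x\<in>AG n. \<forall>y\<in>AG n. E x y \<longleftrightarrow> E (g x) (g y)" using kb(1) unfolding aut_def by blast+
  from kernel_uniform[OF g n] show "g \<in> {restrict id (AG n), restrict inv (AG n)}"
  proof
    assume A: "\<forall>a\<in>{1..n}. \<forall>b\<in>{1..n}. \<forall>c\<in>{1..n}. a \<noteq> b \<longrightarrow> b \<noteq> c \<longrightarrow> a \<noteq> c \<longrightarrow> g (cyc3 a b c) = cyc3 a b c"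
    have "fixN n g" unfolding fixN_def using kb(2) A unfolding three_cycles_def by blast
    then have fx: "\<forall>x\<in>AG n. g x = x" using Dfix[OF kb(1) _ n] by blast
    have "g = restrict id (AG n)"
    proof
      fix x show "g x = restrict id (AG n) x"
        using fx kb(3) unfolding extensional_def by (cases "x \<in> AG n") auto
    qed
    then show ?thesis by blast
  next
    assume B: "\<forall>a\<in>{1..n}. \<forall>b\<in>{1..n}. \<forall>c\<in>{1..n}. a \<noteq> b \<longrightarrow> b \<noteq> c \<longrightarrow> a \<noteq> c \<longrightarrow> g (cyc3 a b c) = cyc3 a c b"
    define h where "h x = g (inv x)" for x
    have hm: "\<forall>x\<in>AG n. h x \<in> AG n" unfolding h_def using gA AG_inv by blast
    have hi: "inj_on h (AG n)"
    proof (rule inj_onI)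
      fix x y assume xy: "x \<in> AG n" "y \<in> AG n" "h x = h y"
      then have "inv x = inv y" using inj AG_inv unfolding h_def inj_on_def by blast
      then show "x = y" using AG_inv_inv xy by metis
    qed
    have he: "\<forall>x\<in>AG n. \<forall>y\<in>AG n. E x y \<longleftrightarrow> E (h x) (h y)"
    proof (intro ballI)
      fix x y assume xy: "x \<in> AG n" "y \<in> AG n"
      have "E x y \<longleftrightarrow> E (inv x) (inv y)"
      proof
        assume "E x y" then show "E (inv x) (inv y)" using inv_E xy by blast
      next
        assume "E (inv x) (inv y)"
        then have "E (inv (inv x)) (inv (inv y))" using inv_E AG_inv xy by blast
        then show "E x y" using AG_inv_inv xy by simp
      qed
      also have "\<dots> \<longleftrightarrow> E (h x) (h y)" unfolding h_def using ge AG_inv xy by blast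
      finally show "E x y \<longleftrightarrow> E (h x) (h y)" .
    qed
    have ha: "aut n h" unfolding aut_def using hm hi he by blast
    have hf: "fixN n h"
      unfolding fixN_def
    proof
      show "h id = id" unfolding h_def using kb(2) by simp
      show "\<forall>t\<in>three_cycles n. h t = t"
      proof
        fix t assume "t \<in> three_cycles n"
        then obtain a b c where r: "a \<in> {1..n}" "b \<in> {1..n}" "c \<in> {1..n}" and d: "a \<noteq> b" "b \<noteq> c" "a \<noteq> c"
          and tt: "t = cyc3 a b c" unfolding three_cycles_def by blast
        have "h t = g (cyc3 a c b)" unfolding h_def tt using inv_cyc3[OF d] by simp
        also have "\<dots> = cyc3 a b c" using B r d by auto
        finally show "h t = t" using tt by simp
      qed
    qed
    have fx: "\<forall>x\<in>AG n. h x = x" using Dfix[OF ha hf n] .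
    have "g = restrict inv (AG n)"
    proof
      fix x show "g x = restrict inv (AG n) x"
      proof (cases "x \<in> AG n")
        case True
        have "h (inv x) = inv x" using fx AG_inv[OF True] by blast
        then show ?thesis unfolding h_def using AG_inv_inv[OF True] True by simp
      next
        case False then show ?thesis using kb(3) unfolding extensional_def by simp
      qed
    qed
    then show ?thesis by blast
  qed
qed

theorem lemma3p6:
  fixes n :: nat
  assumes "n \<ge> 5"
  shows "finite (delta_kernel n) \<and> card (delta_kernel n) \<le> 2"
proof -
  have s: "delta_kernel n \<subseteq> {restrict id (AG n), restrict inv (AG n)}" using kernel_sub[OF assms] .
  have "card {restrict id (AG n), restrict inv (AG n)} \<le> 2" by (simp add: card_insert_if)
  moreover have f: "finite {restrict id (AG n), restrict inv (AG n)}" by simp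
  ultimately show ?thesis using s finite_subset[OF s f] card_mono[OF f s] by simp
qed

end
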